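(* There exists a locally finite poset $Q$ with a minimum element such that: (a) $Q$ has the Möbius uncertainty property: whenever $f,g:Q\to\mathbb{C}$ are functions, neither identically zero, with $g(z)=\sum_{x\leqslant z} f(x)$ for all $z\in Q$, at least one of $\{x: f(x)\neq0\}$ and $\{x: g(x)\neq 0\}$ is infinite; and (b) $Q$ does not have property $\mathcal{H}_3$: there is a three-element subset $S\subset Q$ such that for every $z\in S$ there are only finitely many $x\in Q$ with $x\geqslant z$ and $x\not\geqslant y$ for all $y\in S\setminus\{z\}$. Consequently, the Möbius uncertainty property does not imply property $\mathcal{H}_k$ for every $k\in\mathbb{N}$.
   Context: A poset is locally finite if every interval $\{z: x\leqslant z\leqslant y\}$ is finite. For $k\in\mathbb{N}$, a poset $P$ has property $\mathcal{H}_k$ if for every subset $S\subset P$ with $|S|=k$ there exists $z\in S$ such that infinitely many $x\in P$ satisfy $x\geqslant z$ and $x\not\geqslant y$ for all $y\in S\setminus\{z\}$. *)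

theory Defs
  imports Complex_Main
begin

text \<open>Carriers live in the type nat: a locally finite poset with a
  minimum element is countable, so this loses no generality.\<close>

definition poset_on :: "'a set \<Rightarrow> ('a \<Rightarrow> 'a \<Rightarrow> bool) \<Rightarrow> bool" where
  "poset_on Q le \<longleftrightarrow>
     (\<forall>x\<in>Q. le x x) \<and>
     (\<forall>x\<in>Q. \<forall>y\<in>Q. le x y \<and> le y x \<longrightarrow> x = y) \<and>
     (\<forall>x\<in>Q. \<forall>y\<in>Q. \<forall>z\<in>Q. le x y \<and> le y z \<longrightarrow> le x z)"

definition locally_finite_on :: "'a set \<Rightarrow> ('a \<Rightarrow> 'a \<Rightarrow> bool) \<Rightarrow> bool" where
  "locally_finite_on Q le \<longleftrightarrow> (\<forall>x\<in>Q. \<forall>y\<in>Q. finite {z\<in>Q. le x z \<and> le z y})"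

definition has_minimum_on :: "'a set \<Rightarrow> ('a \<Rightarrow> 'a \<Rightarrow> bool) \<Rightarrow> bool" where
  "has_minimum_on Q le \<longleftrightarrow> (\<exists>m\<in>Q. \<forall>x\<in>Q. le m x)"

definition mobius_uncertainty :: "'a set \<Rightarrow> ('a \<Rightarrow> 'a \<Rightarrow> bool) \<Rightarrow> bool" where
  "mobius_uncertainty Q le \<longleftrightarrow>
     (\<forall>f g :: 'a \<Rightarrow> complex.
        (\<exists>x\<in>Q. f x \<noteq> 0) \<and> (\<exists>x\<in>Q. g x \<noteq> 0) \<and>
        (\<forall>z\<in>Q. g z = (\<Sum>x\<in>{x\<in>Q. le x z}. f x))
        \<longrightarrow> infinite {x\<in>Q. f x \<noteq> 0} \<or> infinite {x\<in>Q. g x \<noteq> 0})"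

definition property_H :: "nat \<Rightarrow> 'a set \<Rightarrow> ('a \<Rightarrow> 'a \<Rightarrow> bool) \<Rightarrow> bool" where
  "property_H k Q le \<longleftrightarrow>
     (\<forall>S. S \<subseteq> Q \<and> finite S \<and> card S = k \<longrightarrow>
        (\<exists>z\<in>S. infinite {x\<in>Q. le z x \<and> (\<forall>y\<in>S - {z}. \<not> le y x)}))"

end

theory Submission imports Defs "HOL-Library.Nat_Bijection"
begin

definition QL :: "nat list set" where
  "QL = {[]} \<union> {[i] | i. i < 3} \<union> {k # ns | k ns. k < 4 \<and> ns \<noteq> []}"

definition leL :: "nat list \<Rightarrow> nat list \<Rightarrow> bool" where
  "leL x y \<longleftrightarrow> x = [] \<or> x = y \<or> (length x = 1 \<and> length y \<ge> 2 \<and> hd x \<noteq> hd y)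
     \<or> (length x \<ge> 2 \<and> (\<exists>zs. y = x @ zs))"

definition RL :: "nat list \<Rightarrow> nat list set" where
  "RL q = {x \<in> QL. x = [] \<or> (length x = 1 \<and> hd x \<noteq> hd q) \<or> (length x \<ge> 2 \<and> (\<exists>zs. q = x @ zs))}"

lemma leL_len: "leL x y \<Longrightarrow> length x \<le> length y"
  unfolding leL_def by auto

lemma leL_eq: "leL x y \<Longrightarrow> length x = length y \<Longrightarrow> x = y"
  unfolding leL_def by auto

lemma leL_trans: assumes "leL x y" "leL y z" shows "leL x z"
proof -
  consider "x = []" | "x = y" | "y = z" | "x \<noteq> []" "x \<noteq> y" "y \<noteq> z" by blast
  then show ?thesis
  proof cases
    case 4
    have y2: "length y \<ge> 2" "y \<noteq> []" using assms(1) 4 unfolding leL_def by auto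
    then obtain ws where ws: "z = y @ ws" using assms(2) 4 unfolding leL_def by auto
    have hz: "hd z = hd y" "length z \<ge> 2" using ws y2 by auto
    show ?thesis
    proof (cases "length x = 1")
      case True
      then have "hd x \<noteq> hd y" using assms(1) 4 unfolding leL_def by auto
      then show ?thesis using True hz unfolding leL_def by auto
    next
      case False
      then obtain zs where "y = x @ zs" "length x \<ge> 2" using assms(1) 4 unfolding leL_def by auto
      then show ?thesis using ws unfolding leL_def by auto
    qed
  qed (use assms in \<open>auto simp: leL_def\<close>)
qed

lemma poset_L: "poset_on QL leL"
proof -
  have "leL x x" for x unfolding leL_def by simp
  moreover have "x = y" if "leL x y" "leL y x" for x y
    using leL_len[OF that(1)] leL_len[OF that(2)] leL_eq[OF that(1)] by simp
  ultimately show ?thesis unfolding poset_on_def using leL_trans by blast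
qed

lemma down_fin: "finite {x\<in>QL. leL x y}"
proof -
  have "{x\<in>QL. leL x y} \<subseteq> {[],[0],[1],[2]} \<union> (\<lambda>i. take i y) ` {..length y}"
  proof
    fix x assume x: "x \<in> {x\<in>QL. leL x y}"
    show "x \<in> {[],[0],[1],[2]} \<union> (\<lambda>i. take i y) ` {..length y}"
    proof (cases "length x = 1")
      case True
      then show ?thesis using x unfolding QL_def by auto
    next
      case False
      then have "x = [] \<or> (\<exists>zs. y = x @ zs)" using x unfolding leL_def by auto
      then show ?thesis by (auto intro!: image_eqI[where x="length x"])
    qed
  qed
  then show ?thesis by (rule finite_subset) auto
qed

lemma lf_L: "locally_finite_on QL leL"
  unfolding locally_finite_on_def
  by (auto intro: finite_subset[OF _ down_fin])

lemma min_L: "has_minimum_on QL leL"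
  unfolding has_minimum_on_def QL_def leL_def by auto

lemma notH_L: "\<not> property_H 3 QL leL"
proof -
  let ?S = "{[0],[1],[2]} :: nat list set"
  have "?S \<subseteq> QL" unfolding QL_def by auto
  moreover have "card ?S = 3" by simp
  moreover have "finite {x\<in>QL. leL z x \<and> (\<forall>y\<in>?S - {z}. \<not> leL y x)}" if zS: "z \<in> ?S" for z
  proof -
    obtain i where i: "z = [i]" "i < 3" using zS by auto
    have "{x\<in>QL. leL z x \<and> (\<forall>y\<in>?S - {z}. \<not> leL y x)} \<subseteq> {z}"
    proof
      fix x assume x: "x \<in> {x\<in>QL. leL z x \<and> (\<forall>y\<in>?S - {z}. \<not> leL y x)}"
      show "x \<in> {z}"
      proof (rule ccontr)
        assume "x \<notin> {z}"
        then have "leL [i] x" "x \<noteq> [i]" using x i by auto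
        then have x2: "length x \<ge> 2" "hd x \<noteq> i" unfolding leL_def by auto
        obtain j where j: "j < 3" "j \<noteq> i" "j \<noteq> hd x"
        proof -
          have "\<exists>j::nat. j < 3 \<and> j \<noteq> i \<and> j \<noteq> hd x" by presburger
          then show ?thesis using that by blast
        qed
        have "[j] \<in> ?S - {z}" using j i by auto
        moreover have "leL [j] x" unfolding leL_def using x2 j by simp
        ultimately show False using x by blast
      qed
    qed
    then show ?thesis by (rule finite_subset) auto
  qed
  moreover have "finite ?S" by simp
  ultimately show ?thesis unfolding property_H_def by blast
qed

lemma RL_notin: "q \<noteq> [] \<Longrightarrow> q@[n] \<notin> RL q"
  unfolding RL_def by auto

lemma RL_down:
  assumes "q \<noteq> []" "hd q < 4"
  shows "{x\<in>QL. leL x (q@[n])} = insert (q@[n]) (RL q)"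
proof (rule set_eqI, rule iffI)
  fix x assume "x \<in> {x\<in>QL. leL x (q@[n])}"
  then have xQ: "x \<in> QL" and xl: "leL x (q@[n])" by auto
  show "x \<in> insert (q@[n]) (RL q)"
  proof (cases "x = q@[n]")
    case False
    have hq: "hd (q@[n]) = hd q" using assms by simp
    from xl have "x = [] \<or> x = q@[n] \<or> (length x = 1 \<and> hd x \<noteq> hd (q@[n])) \<or> (length x \<ge> 2 \<and> (\<exists>zs. q@[n] = x@zs))"
      unfolding leL_def by blast
    then have "x = [] \<or> (length x = 1 \<and> hd x \<noteq> hd q) \<or> (length x \<ge> 2 \<and> (\<exists>zs. q = x @ zs))"
    proof (elim disjE)
      assume "length x \<ge> 2 \<and> (\<exists>zs. q@[n] = x@zs)"
      then obtain zs where zs: "q@[n] = x@zs" "length x \<ge> 2" by blast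
      have "zs \<noteq> []" using zs False by auto
      then have "q = x @ butlast zs" using zs
        by (metis butlast_append butlast_snoc)
      then show ?thesis using zs by blast
    qed (use False hq in \<open>simp_all\<close>)
    then show ?thesis using xQ unfolding RL_def by blast
  qed simp
next
  fix x assume x: "x \<in> insert (q@[n]) (RL q)"
  obtain k ns where q: "q = k#ns" using assms by (cases q) auto
  have k4: "k < 4" using assms q by simp
  have "k#(ns@[n]) \<in> {k # ns | k ns. k < 4 \<and> ns \<noteq> []}" using k4 by blast
  then have qQ: "q@[n] \<in> QL" unfolding QL_def using q by simp
  show "x \<in> {x\<in>QL. leL x (q@[n])}"
  proof (cases "x = q@[n]")
    case True
    then show ?thesis using qQ unfolding leL_def by simp
  next
    case False
    then have xR: "x \<in> QL" "x = [] \<or> (length x = 1 \<and> hd x \<noteq> hd q) \<or> (length x \<ge> 2 \<and> (\<exists>zs. q = x @ zs))"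
      using x unfolding RL_def by auto
    have l2: "length (q@[n]) \<ge> 2" "hd (q@[n]) = hd q" using q by auto
    from xR(2) have "leL x (q@[n])"
    proof (elim disjE)
      assume "length x \<ge> 2 \<and> (\<exists>zs. q = x @ zs)"
      then obtain zs where "length x \<ge> 2" "q = x @ zs" by blast
      then show ?thesis unfolding leL_def by simp
    qed (use l2 in \<open>simp_all add: leL_def\<close>)
    then show ?thesis using xR by simp
  qed
qed


lemma snoc_QL: assumes "q \<noteq> []" "hd q < 4" shows "q@[n] \<in> QL"
  using RL_down[OF assms, of n] by blast

lemma finite_RL: "q \<noteq> [] \<Longrightarrow> hd q < 4 \<Longrightarrow> finite (RL q)"
  using RL_down[of q 0] down_fin[of "q@[0]"] by (metis finite_insert)

lemma g_snoc:
  assumes q: "q \<noteq> []" "hd q < 4"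
  and gdef: "\<forall>z\<in>QL. g z = (\<Sum>x\<in>{x\<in>QL. leL x z}. f x)"
  shows "g (q@[n]) = f (q@[n]) + sum f (RL q)"
proof -
  have "g (q@[n]) = sum f (insert (q@[n]) (RL q))"
    using gdef snoc_QL[OF q] RL_down[OF q] by simp
  also have "\<dots> = f (q@[n]) + sum f (RL q)"
    using finite_RL[OF q] RL_notin[OF q(1)] by simp
  finally show ?thesis .
qed

lemma lemA:
  assumes q: "q \<noteq> []" "hd q < 4"
  and gfin: "finite {x\<in>QL. g x \<noteq> 0}"
  and ffin: "finite {n. f (q@[n]) \<noteq> 0}"
  and gdef: "\<forall>z\<in>QL. g z = (\<Sum>x\<in>{x\<in>QL. leL x z}. f x)"
  shows "sum f (RL q) = 0"
proof (rule ccontr)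
  assume c: "sum f (RL q) \<noteq> 0"
  have inf: "infinite (UNIV - {n. f (q@[n]) \<noteq> 0})"
    using ffin by (simp add: Diff_infinite_finite)
  have "(\<lambda>n. q@[n]) ` (UNIV - {n. f (q@[n]) \<noteq> 0}) \<subseteq> {x\<in>QL. g x \<noteq> 0}"
    using g_snoc[OF q gdef] snoc_QL[OF q] c by auto
  then have "finite ((\<lambda>n. q@[n]) ` (UNIV - {n. f (q@[n]) \<noteq> 0}))"
    using gfin finite_subset by blast
  moreover have "inj (\<lambda>n. q@[n])" by (rule injI) simp
  ultimately show False using inf finite_imageD by (metis inj_on_subset subset_UNIV)
qed

lemma QL_cases: assumes "x \<in> QL" shows "x = [] \<or> (\<exists>i<3. x = [i]) \<or> (length x \<ge> 2 \<and> hd x < 4)"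
proof -
  have "x = [] \<or> (\<exists>i. x = [i] \<and> i < 3) \<or> (\<exists>k ns. x = k#ns \<and> k < 4 \<and> ns \<noteq> [])"
    using assms unfolding QL_def by blast
  then show ?thesis
  proof (elim disjE exE conjE)
    fix k ns assume "x = k#ns" "k < 4" "ns \<noteq> []"
    then show ?thesis by (cases ns) auto
  qed blast+
qed

lemma down_RL:
  assumes "length m \<ge> 2"
  shows "{x\<in>QL. leL x m} = RL m"
proof (rule set_eqI, rule iffI)
  fix x assume "x \<in> {x\<in>QL. leL x m}"
  then have "x \<in> QL" "x = [] \<or> x = m \<or> (length x = 1 \<and> hd x \<noteq> hd m) \<or> (length x \<ge> 2 \<and> (\<exists>zs. m = x@zs))"
    unfolding leL_def by auto
  moreover have "x = m \<Longrightarrow> length x \<ge> 2 \<and> (\<exists>zs. m = x@zs)" using assms by simp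
  ultimately have "x \<in> QL" "x = [] \<or> (length x = 1 \<and> hd x \<noteq> hd m) \<or> (length x \<ge> 2 \<and> (\<exists>zs. m = x@zs))"
    by blast+
  then show "x \<in> RL m" unfolding RL_def by blast
next
  fix x assume "x \<in> RL m"
  then have "x \<in> QL" "x = [] \<or> (length x = 1 \<and> hd x \<noteq> hd m) \<or> (length x \<ge> 2 \<and> (\<exists>zs. m = x@zs))"
    unfolding RL_def by auto
  moreover have "leL x m" if "x = [] \<or> (length x = 1 \<and> hd x \<noteq> hd m) \<or> (length x \<ge> 2 \<and> (\<exists>zs. m = x@zs))"
    using that assms unfolding leL_def by blast
  ultimately show "x \<in> {x\<in>QL. leL x m}" by blast
qed

lemma single_QL: "i < 3 \<Longrightarrow> [i] \<in> QL"
  unfolding QL_def by blast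

lemma RL_root: "RL [k] = insert [] ((\<lambda>i. [i]) ` {i. i < 3 \<and> i \<noteq> k})"
proof (rule set_eqI, rule iffI)
  fix x assume x: "x \<in> RL [k]"
  then have xQ: "x \<in> QL" and d: "x = [] \<or> (length x = 1 \<and> hd x \<noteq> k) \<or> (length x \<ge> 2 \<and> (\<exists>zs. [k] = x@zs))"
    unfolding RL_def by auto
  have "length x \<le> 1" if "[k] = x@zs" for zs
    using arg_cong[OF that, of length] by simp
  then have "x = [] \<or> (length x = 1 \<and> hd x \<noteq> k)" using d by fastforce
  moreover have "x \<in> (\<lambda>i. [i]) ` {i. i < 3 \<and> i \<noteq> k}" if "length x = 1" "hd x \<noteq> k"
  proof -
    from QL_cases[OF xQ] that obtain i where "i < 3" "x = [i]" by auto
    then show ?thesis using that by auto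
  qed
  ultimately show "x \<in> insert [] ((\<lambda>i. [i]) ` {i. i < 3 \<and> i \<noteq> k})"
    by blast
next
  fix x assume "x \<in> insert [] ((\<lambda>i. [i]) ` {i. i < 3 \<and> i \<noteq> k})"
  then have "x = [] \<or> (\<exists>i. i < 3 \<and> i \<noteq> k \<and> x = [i])" by auto
  moreover have "[] \<in> QL" unfolding QL_def by blast
  ultimately show "x \<in> RL [k]" unfolding RL_def using single_QL by auto
qed

lemma sum_RL_root: "sum f (RL [k]) = f [] + (\<Sum>i\<in>{i. i < 3 \<and> i \<noteq> k}. f [i])"
proof -
  have "finite {i::nat. i < 3 \<and> i \<noteq> k}" by simp
  moreover have "inj_on (\<lambda>i. [i]) {i::nat. i < 3 \<and> i \<noteq> k}" by (rule inj_onI) simp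
  ultimately show ?thesis unfolding RL_root
    by (simp add: sum.reindex image_iff)
qed

lemma mob_zero:
  fixes f g :: "nat list \<Rightarrow> complex"
  assumes ffin: "finite {x\<in>QL. f x \<noteq> 0}"
  and gfin: "finite {x\<in>QL. g x \<noteq> 0}"
  and gdef: "\<forall>z\<in>QL. g z = (\<Sum>x\<in>{x\<in>QL. leL x z}. f x)"
  shows "\<forall>x\<in>QL. f x = 0"
proof -
  have up: "\<forall>x\<in>QL. length x \<ge> 2 \<longrightarrow> f x = 0"
  proof (rule ccontr)
    assume "\<not> (\<forall>x\<in>QL. length x \<ge> 2 \<longrightarrow> f x = 0)"
    define F where "F = {x\<in>QL. length x \<ge> 2 \<and> f x \<noteq> 0}"
    have Fne: "F \<noteq> {}" using \<open>\<not> _\<close> unfolding F_def by auto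
    have Ffin: "finite F" unfolding F_def by (rule finite_subset[OF _ ffin]) auto
    have "Max (length ` F) \<in> length ` F" using Fne Ffin by (intro Max_in) auto
    then obtain m where mF: "m \<in> F" and mmax: "length m = Max (length ` F)" by auto
    have mle: "length x \<le> length m" if "x \<in> F" for x
      using mmax Ffin that by simp
    have mQ: "m \<in> QL" "length m \<ge> 2" "f m \<noteq> 0" using mF unfolding F_def by auto
    then have hm: "hd m < 4" "m \<noteq> []" using QL_cases[OF mQ(1)] by auto
    have "f (m@[n]) = 0" for n
    proof (rule ccontr)
      assume "f (m@[n]) \<noteq> 0"
      then have "m@[n] \<in> F" unfolding F_def using snoc_QL[OF hm(2) hm(1)] mQ by auto
      then show False using mle by fastforce
    qed
    then have "sum f (RL m) = 0" using lemA[OF hm(2) hm(1) gfin _ gdef] by simp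
    then have gm: "g m = 0" using gdef mQ down_RL[OF mQ(2)] by simp
    define p where "p = butlast m"
    have mp: "m = p @ [last m]" unfolding p_def using hm by simp
    have lp: "length p = length m - 1" unfolding p_def by simp
    then have p1: "p \<noteq> []" using mQ(2) by auto
    have "hd m = hd p" using mp p1 by (metis hd_append2)
    then have p: "p \<noteq> []" "hd p < 4" using p1 hm by auto
    have "{n. f (p@[n]) \<noteq> 0} = (\<lambda>n. p@[n]) -` {x\<in>QL. f x \<noteq> 0}"
      using snoc_QL[OF p] by auto
    then have "finite {n. f (p@[n]) \<noteq> 0}"
      using finite_vimageI[OF ffin, of "\<lambda>n. p@[n]"] by (simp add: inj_on_def)
    then have "sum f (RL p) = 0" using lemA[OF p gfin _ gdef] by simp
    then have "g m = f m" using g_snoc[OF p gdef, of "last m"] mp by simp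
    then show False using gm mQ by simp
  qed
  have root: "f [] + (\<Sum>i\<in>{i. i < 3 \<and> i \<noteq> k}. f [i]) = 0" if "k < 4" for k
  proof -
    have "f ([k]@[n]) = 0" for n using up snoc_QL[of "[k]" n] that by simp
    then have "sum f (RL [k]) = 0" using lemA[of "[k]" g f] that gfin gdef by simp
    then show ?thesis by (simp add: sum_RL_root)
  qed
  have s0: "{i::nat. i < 3 \<and> i \<noteq> 0} = {1,2}" by auto
  have s1: "{i::nat. i < 3 \<and> i \<noteq> 1} = {0,2}" by auto
  have s2: "{i::nat. i < 3 \<and> i \<noteq> 2} = {0,1}" by auto
  have s3: "{i::nat. i < 3 \<and> i \<noteq> 3} = {0,1,2}" by auto
  have e0: "f [] + f [1] + f [2] = 0" using root[of 0] s0 by (simp add: add.assoc)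
  have e1: "f [] + f [0] + f [2] = 0" using root[of 1] s1 by (simp add: add.assoc)
  have e2: "f [] + f [0] + f [1] = 0" using root[of 2] s2 by (simp add: add.assoc)
  have e3: "f [] + f [0] + f [1] + f [2] = 0" using root[of 3] s3 by (simp add: add.assoc)
  have "f [0] = (f [] + f [0] + f [1] + f [2]) - (f [] + f [1] + f [2])" by (simp add: algebra_simps)
  then have "f [0] = 0 - 0" by (simp only: e3 e0)
  then have z0: "f [0] = 0" by simp
  have "f [1] = (f [] + f [0] + f [1] + f [2]) - (f [] + f [0] + f [2])" by (simp add: algebra_simps)
  then have "f [1] = 0 - 0" by (simp only: e3 e1)
  then have z1: "f [1] = 0" by simp
  have "f [2] = (f [] + f [0] + f [1] + f [2]) - (f [] + f [0] + f [1])" by (simp add: algebra_simps)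
  have z2: "f [2] = 0" using e3 e2 by simp
  have ze: "f [] = 0" using e0 z1 z2 by simp
  have "f [i] = 0" if "i < 3" for i
  proof -
    have "i = 0 \<or> i = 1 \<or> i = 2" using that by arith
    then show ?thesis using z0 z1 z2 by auto
  qed
  then show ?thesis
  proof (intro ballI)
    fix x assume xQ: "x \<in> QL"
    from QL_cases[OF xQ] show "f x = 0"
    proof (elim disjE exE conjE)
      assume "length x \<ge> 2" then show ?thesis using up xQ by blast
    qed (use ze \<open>\<And>i. i < 3 \<Longrightarrow> f [i] = 0\<close> in simp_all)
  qed
qed

lemma mob_L: "mobius_uncertainty QL leL"
  unfolding mobius_uncertainty_def
  using mob_zero by blast


definition QN :: "nat set" where "QN = list_decode -` QL"
definition leN :: "nat \<Rightarrow> nat \<Rightarrow> bool" where "leN x y = leL (list_decode x) (list_decode y)"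

lemma poset_N: "poset_on QN leN"
proof -
  have P: "\<forall>x\<in>QL. leL x x" "\<forall>x\<in>QL. \<forall>y\<in>QL. leL x y \<and> leL y x \<longrightarrow> x = y"
     "\<forall>x\<in>QL. \<forall>y\<in>QL. \<forall>z\<in>QL. leL x y \<and> leL y z \<longrightarrow> leL x z"
    using poset_L unfolding poset_on_def by blast+
  have "\<forall>x\<in>QN. leN x x" unfolding QN_def leN_def vimage_def using P(1) by blast
  moreover have "\<forall>x\<in>QN. \<forall>y\<in>QN. leN x y \<and> leN y x \<longrightarrow> x = y"
  proof (intro ballI impI)
    fix x y assume "x \<in> QN" "y \<in> QN" "leN x y \<and> leN y x"
    then have "list_decode x = list_decode y" using P(2) unfolding QN_def leN_def vimage_def by blast
    then show "x = y" by (simp add: list_decode_eq)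
  qed
  moreover have "\<forall>x\<in>QN. \<forall>y\<in>QN. \<forall>z\<in>QN. leN x y \<and> leN y z \<longrightarrow> leN x z"
    using P(3) unfolding QN_def leN_def vimage_def by blast
  ultimately show ?thesis unfolding poset_on_def by blast
qed

lemma lf_N: "locally_finite_on QN leN"
proof -
  have "finite {z\<in>QN. leN x z \<and> leN z y}" if "x \<in> QN" "y \<in> QN" for x y
  proof -
    have "{z\<in>QN. leN x z \<and> leN z y} = list_decode -` {z\<in>QL. leL (list_decode x) z \<and> leL z (list_decode y)}"
      unfolding QN_def leN_def vimage_def by blast
    moreover have "list_decode x \<in> QL" "list_decode y \<in> QL" using that unfolding QN_def by auto
    then have "finite {z\<in>QL. leL (list_decode x) z \<and> leL z (list_decode y)}"
      using lf_L unfolding locally_finite_on_def by blast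
    ultimately show ?thesis using finite_vimageI[OF _ inj_list_decode] by (simp only:)
  qed
  then show ?thesis unfolding locally_finite_on_def by blast
qed

lemma min_N: "has_minimum_on QN leN"
proof -
  obtain m where m: "m \<in> QL" "\<forall>x\<in>QL. leL m x" using min_L unfolding has_minimum_on_def by blast
  have "list_encode m \<in> QN" "\<forall>x\<in>QN. leN (list_encode m) x"
    using m unfolding QN_def leN_def by auto
  then show ?thesis unfolding has_minimum_on_def by blast
qed

lemma img_QN: "{x\<in>QN. P (list_decode x)} = list_encode ` {y\<in>QL. P y}"
proof (rule set_eqI, rule iffI)
  fix x assume "x \<in> {x\<in>QN. P (list_decode x)}"
  then show "x \<in> list_encode ` {y\<in>QL. P y}" unfolding QN_def
    by (intro image_eqI[where x="list_decode x"]) auto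
qed (auto simp: QN_def)

lemma mob_N: "mobius_uncertainty QN leN"
  unfolding mobius_uncertainty_def
proof (intro allI impI)
  fix f g :: "nat \<Rightarrow> complex"
  assume a: "(\<exists>x\<in>QN. f x \<noteq> 0) \<and> (\<exists>x\<in>QN. g x \<noteq> 0) \<and> (\<forall>z\<in>QN. g z = (\<Sum>x\<in>{x\<in>QN. leN x z}. f x))"
  define f' where "f' = f \<circ> list_encode"
  define g' where "g' = g \<circ> list_encode"
  have ie: "inj_on list_encode A" for A by (rule inj_list_encode)
  have gdef: "\<forall>z\<in>QL. g' z = (\<Sum>x\<in>{x\<in>QL. leL x z}. f' x)"
  proof
    fix z assume z: "z \<in> QL"
    have "list_encode z \<in> QN" using z unfolding QN_def by simp
    then have "g' z = (\<Sum>x\<in>{x\<in>QN. leL (list_decode x) z}. f x)"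
      using a unfolding g'_def leN_def by simp
    also have "\<dots> = (\<Sum>x\<in>{x\<in>QL. leL x z}. f' x)"
    proof -
      have "{x\<in>QN. leL (list_decode x) z} = list_encode ` {y\<in>QL. leL y z}" by (rule img_QN)
      then show ?thesis unfolding f'_def by (simp add: sum.reindex[OF ie])
    qed
    finally show "g' z = (\<Sum>x\<in>{x\<in>QL. leL x z}. f' x)" .
  qed
  have fs: "{x\<in>QN. f x \<noteq> 0} = list_encode ` {y\<in>QL. f' y \<noteq> 0}"
    using img_QN[of "\<lambda>y. f (list_encode y) \<noteq> 0"] unfolding f'_def by simp
  have gs: "{x\<in>QN. g x \<noteq> 0} = list_encode ` {y\<in>QL. g' y \<noteq> 0}"
    using img_QN[of "\<lambda>y. g (list_encode y) \<noteq> 0"] unfolding g'_def by simp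
  obtain x where x: "x \<in> QN" "f x \<noteq> 0" using a by blast
  have "list_decode x \<in> QL" "f' (list_decode x) \<noteq> 0" using x unfolding QN_def f'_def by auto
  then have "\<not> (finite {y\<in>QL. f' y \<noteq> 0} \<and> finite {y\<in>QL. g' y \<noteq> 0})"
    using mob_zero[OF _ _ gdef] by blast
  then show "infinite {x\<in>QN. f x \<noteq> 0} \<or> infinite {x\<in>QN. g x \<noteq> 0}"
    unfolding fs gs using finite_image_iff[OF ie] by blast
qed

lemma notH_N: "\<not> property_H 3 QN leN"
proof -
  obtain S' where S': "S' \<subseteq> QL" "finite S'" "card S' = 3"
    and fin: "\<forall>z\<in>S'. finite {x\<in>QL. leL z x \<and> (\<forall>y\<in>S' - {z}. \<not> leL y x)}"
    using notH_L unfolding property_H_def by blast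
  let ?S = "list_encode ` S'"
  have ie: "inj_on list_encode A" for A by (rule inj_list_encode)
  have "?S \<subseteq> QN" using S' unfolding QN_def by auto
  moreover have "finite ?S" "card ?S = 3" using S' card_image[OF ie] by auto
  moreover have "finite {x\<in>QN. leN z x \<and> (\<forall>y\<in>?S - {z}. \<not> leN y x)}" if z: "z \<in> ?S" for z
  proof -
    obtain z' where z': "z' \<in> S'" "z = list_encode z'" using z by blast
    have "{x\<in>QN. leN z x \<and> (\<forall>y\<in>?S - {z}. \<not> leN y x)} \<subseteq>
          list_encode ` {x\<in>QL. leL z' x \<and> (\<forall>y\<in>S' - {z'}. \<not> leL y x)}"
    proof
      fix x assume x: "x \<in> {x\<in>QN. leN z x \<and> (\<forall>y\<in>?S - {z}. \<not> leN y x)}"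
      have "\<forall>y\<in>S' - {z'}. \<not> leL y (list_decode x)"
      proof
        fix y assume y: "y \<in> S' - {z'}"
        then have "list_encode y \<in> ?S - {z}" using z' by (auto simp: list_encode_eq)
        moreover have "\<forall>y\<in>?S - {z}. \<not> leN y x" using x by blast
        ultimately have "\<not> leN (list_encode y) x" by blast
        then show "\<not> leL y (list_decode x)" unfolding leN_def by simp
      qed
      then have "list_decode x \<in> {x\<in>QL. leL z' x \<and> (\<forall>y\<in>S' - {z'}. \<not> leL y x)}"
        using x z' unfolding QN_def leN_def by auto
      then show "x \<in> list_encode ` {x\<in>QL. leL z' x \<and> (\<forall>y\<in>S' - {z'}. \<not> leL y x)}"
        by (intro image_eqI[where x="list_decode x"]) auto
    qed
    then show ?thesis using fin z'(1) finite_subset by blast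
  qed
  ultimately show ?thesis unfolding property_H_def by blast
qed

theorem theorem1p7:
  shows "\<exists>(Q :: nat set) (le :: nat \<Rightarrow> nat \<Rightarrow> bool).
           poset_on Q le \<and> locally_finite_on Q le \<and> has_minimum_on Q le \<and>
           mobius_uncertainty Q le \<and> \<not> property_H 3 Q le"
  using poset_N lf_N min_N mob_N notH_N by blast

end
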